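(* Consider the family of NSG-compositions $x_1+\cdots+x_{m-1}$ with maximum $5$ whose last maximal part $x_l=5$ (i.e. $x_l=5$ and $x_i<5$ for $i>l$) satisfies $3l\ge m-1$. Its growth-rate is at most $1/\rho$, where $\rho=0.6189\ldots>\omega^{-1}$ is the positive root of $1-I_5I_4^2$, with $I_4=3q^4+4q^5+3q^6+2q^7+q^8$ and $I_5=4q^5+5q^6+4q^7+3q^8+2q^9+q^{10}$. In particular this growth-rate is strictly smaller than $\omega=\frac{1+\sqrt5}2$.
   Context: An NSG-composition is a composition $x_1+\cdots+x_{m-1}$ of positive integers satisfying $x_{s+t}\le x_s+x_t$ and $x_{m-s-t}\le x_{m-s}+x_{m-t}+1$ for all $s,t\ge1$, $s+t<m$ (equivalently, the Kunz vector of a numerical semigroup of multiplicity $m$); its genus is $\sum x_j$. The growth-rate of a family is $\limsup_{g\to\infty}a_g^{1/g}$ with $a_g$ the number of members of genus $g$. *)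

theory Defs
  imports "HOL-Analysis.Analysis"
begin

text \<open>A composition x_1+...+x_{m-1} is represented by the list xs with
  xs ! (j-1) = x_j, so m = length xs + 1.\<close>

definition part :: "nat list \<Rightarrow> nat \<Rightarrow> nat" where
  "part xs j = xs ! (j - 1)"

definition nsg_comp :: "nat list \<Rightarrow> bool" where
  "nsg_comp xs \<longleftrightarrow>
     (let m = length xs + 1 in
       (\<forall>x\<in>set xs. x > 0) \<and>
       (\<forall>s t. 1 \<le> s \<longrightarrow> 1 \<le> t \<longrightarrow> s + t < m \<longrightarrow>
          part xs (s + t) \<le> part xs s + part xs t \<and>
          part xs (m - s - t) \<le> part xs (m - s) + part xs (m - t) + 1))"

definition genus :: "nat list \<Rightarrow> nat" where
  "genus xs = sum_list xs"

definition last_max5 :: "nat list \<Rightarrow> nat" where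
  "last_max5 xs = Max {l. 1 \<le> l \<and> l \<le> length xs \<and> part xs l = 5}"

definition fam5 :: "nat list \<Rightarrow> bool" where
  "fam5 xs \<longleftrightarrow> nsg_comp xs \<and> 5 \<in> set xs \<and> (\<forall>x\<in>set xs. x \<le> 5)
     \<and> 3 * last_max5 xs \<ge> length xs"

definition count_fam5 :: "nat \<Rightarrow> nat" where
  "count_fam5 g = card {xs. fam5 xs \<and> genus xs = g}"

definition growth_rate :: "(nat \<Rightarrow> nat) \<Rightarrow> ereal" where
  "growth_rate a = limsup (\<lambda>g. ereal (root g (real (a g))))"

definition I4 :: "real \<Rightarrow> real" where
  "I4 q = 3*q^4 + 4*q^5 + 3*q^6 + 2*q^7 + q^8"

definition I5 :: "real \<Rightarrow> real" where
  "I5 q = 4*q^5 + 5*q^6 + 4*q^7 + 3*q^8 + 2*q^9 + q^10"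

definition omega :: real where
  "omega = (1 + sqrt 5) / 2"

end

theory Submission
  imports Defs "HOL-Real_Asymp.Real_Asymp"
begin

definition PA :: "nat \<Rightarrow> nat \<Rightarrow> nat \<Rightarrow> nat list set" where
  "PA M T k = {u. length u = k \<and> (\<forall>x\<in>set u. 1 \<le> x \<and> x \<le> M) \<and> (\<forall>i<k. T \<le> u!i + u!(k-1-i))}"

definition DD :: "nat \<Rightarrow> nat \<Rightarrow> (nat \<times> nat) set" where
  "DD M T = {p \<in> {1..M} \<times> {1..M}. T \<le> fst p + snd p}"

definition JJ :: "nat \<Rightarrow> nat \<Rightarrow> real \<Rightarrow> real" where
  "JJ M T q = (\<Sum>a=1..M. \<Sum>b=1..M. if T \<le> a+b then q^(a+b) else 0)"

lemma finite_PA: "finite (PA M T k)"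
proof -
  have "PA M T k \<subseteq> {xs. set xs \<subseteq> {1..M} \<and> length xs = k}"
    unfolding PA_def by auto
  moreover have "finite {xs. set xs \<subseteq> {1..M} \<and> length xs = k}"
    by (rule finite_lists_length_eq) simp
  ultimately show ?thesis by (rule finite_subset)
qed

lemma finite_DD: "finite (DD M T)"
  unfolding DD_def by auto

lemma JJ_DD: "JJ M T q = (\<Sum>p\<in>DD M T. q^(fst p + snd p))"
proof -
  have "(\<Sum>p\<in>DD M T. q^(fst p + snd p)) =
        (\<Sum>p\<in>{1..M} \<times> {1..M}. if T \<le> fst p + snd p then q^(fst p + snd p) else 0)"
    unfolding DD_def by (rule sum.inter_filter) auto
  also have "\<dots> = JJ M T q"
    unfolding JJ_def by (simp add: sum.cartesian_product case_prod_beta)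
  finally show ?thesis by simp
qed

lemma JJ_nonneg: "0 \<le> q \<Longrightarrow> 0 \<le> JJ M T q"
  unfolding JJ_def by (intro sum_nonneg) auto

lemma peel:
  assumes "u \<in> PA M T (Suc (Suc k))"
  shows "u \<in> (\<lambda>(p, v). fst p # v @ [snd p]) ` (DD M T \<times> PA M T k)"
proof -
  from assms have len: "length u = Suc (Suc k)"
    and vals: "\<forall>x\<in>set u. 1 \<le> x \<and> x \<le> M"
    and c: "\<forall>i<Suc (Suc k). T \<le> u!i + u!(Suc (Suc k)-1-i)"
    unfolding PA_def by auto
  define v where "v = butlast (tl u)"
  have lv: "length v = k" using len by (simp add: v_def)
  have vi: "v!i = u!(Suc i)" if "i < k" for i
    using that len by (simp add: v_def nth_butlast nth_tl)
  have u_eq: "u = hd u # v @ [last u]"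
  proof -
    have "u \<noteq> []" using len by auto
    then have "u = hd u # tl u" by simp
    moreover have "tl u \<noteq> []" using len by (cases u) auto
    then have "tl u = butlast (tl u) @ [last (tl u)]" by simp
    moreover have "last (tl u) = last u" using \<open>tl u \<noteq> []\<close>
      by (metis \<open>u \<noteq> []\<close> last_tl)
    ultimately show ?thesis unfolding v_def by metis
  qed
  have hd_eq: "hd u = u!0" using len by (cases u) auto
  have last_eq: "last u = u!(Suc k)"
  proof -
    have "u \<noteq> []" using len by auto
    then have "last u = u!(length u - 1)" by (rule last_conv_nth)
    then show ?thesis using len by simp
  qed
  have "hd u \<in> set u" "last u \<in> set u" using len by (auto intro: hd_in_set last_in_set)
  then have hb: "hd u \<in> {1..M}" "last u \<in> {1..M}" using vals by auto
  have "T \<le> u!0 + u!(Suc k)" using c[rule_format, of 0] by simp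
  then have pD: "(hd u, last u) \<in> DD M T" using hb unfolding DD_def hd_eq last_eq by auto
  have vPA: "v \<in> PA M T k"
    unfolding PA_def
  proof (intro CollectI conjI allI impI ballI)
    show "length v = k" by (rule lv)
  next
    fix x assume "x \<in> set v"
    then have "x \<in> set u" unfolding v_def by (metis in_set_butlastD list.sel(2) list.set_sel(2))
    then show "1 \<le> x" "x \<le> M" using vals by auto
  next
    fix i assume i: "i < k"
    have "T \<le> u!(Suc i) + u!(Suc (Suc k)-1-(Suc i))" using c[rule_format, of "Suc i"] i by linarith
    moreover have "Suc (Suc k)-1-(Suc i) = Suc (k-1-i)" using i by simp
    moreover have "k-1-i < k" using i by simp
    ultimately show "T \<le> v!i + v!(k-1-i)" using vi i by simp
  qed
  show ?thesis
    using pD vPA u_eq by (intro image_eqI[where x="((hd u, last u), v)"]) auto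
qed

lemma PA_bound:
  fixes q :: real
  assumes q: "0 \<le> q"
  shows "(\<Sum>u\<in>PA M T k. q^(sum_list u)) \<le> (1 + (\<Sum>x=1..M. q^x)) * JJ M T q ^ (k div 2)"
proof (induction k rule: less_induct)
  case (less k)
  have c0: "0 \<le> (\<Sum>x=1..M. q^x)" using q by (intro sum_nonneg) auto
  show ?case
  proof (cases k)
    case 0
    then have "PA M T k = {[]}" unfolding PA_def by auto
    then show ?thesis using 0 c0 by simp
  next
    case (Suc k1)
    show ?thesis
    proof (cases k1)
      case 0
      have sub: "PA M T k \<subseteq> (\<lambda>x. [x]) ` {1..M}"
      proof
        fix u assume "u \<in> PA M T k"
        then have "length u = 1" "\<forall>x\<in>set u. 1 \<le> x \<and> x \<le> M" unfolding PA_def using Suc 0 by auto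
        then show "u \<in> (\<lambda>x. [x]) ` {1..M}"
          by (cases u) auto
      qed
      have "(\<Sum>u\<in>PA M T k. q^(sum_list u)) \<le> (\<Sum>u\<in>(\<lambda>x. [x]) ` {1..M}. q^(sum_list u))"
        by (rule sum_mono2) (use sub q in auto)
      also have "\<dots> = (\<Sum>x=1..M. q^x)"
        by (subst sum.reindex) (auto simp: inj_on_def)
      finally show ?thesis using Suc 0 by simp
    next
      case (Suc k2)
      have kk: "k = Suc (Suc k2)" using \<open>k = Suc k1\<close> Suc by simp
      let ?f = "\<lambda>(p::nat\<times>nat, v::nat list). fst p # v @ [snd p]"
      have sub: "PA M T k \<subseteq> ?f ` (DD M T \<times> PA M T k2)"
        using peel kk by blast
      have fin: "finite (DD M T \<times> PA M T k2)" using finite_DD finite_PA by auto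
      have "(\<Sum>u\<in>PA M T k. q^(sum_list u)) \<le> (\<Sum>u\<in>?f ` (DD M T \<times> PA M T k2). q^(sum_list u))"
        by (rule sum_mono2) (use sub q fin in auto)
      also have "\<dots> \<le> (\<Sum>x\<in>DD M T \<times> PA M T k2. q^(sum_list (?f x)))"
        using sum_image_le[OF fin, of "\<lambda>u. q^(sum_list u)" ?f] q by (simp add: o_def)
      also have "\<dots> = (\<Sum>x\<in>DD M T \<times> PA M T k2. q^(fst (fst x) + snd (fst x)) * q^(sum_list (snd x)))"
        by (intro sum.cong) (auto simp: power_add ac_simps)
      also have "\<dots> = (\<Sum>p\<in>DD M T. q^(fst p + snd p)) * (\<Sum>v\<in>PA M T k2. q^(sum_list v))"
        by (simp add: sum_product sum.cartesian_product case_prod_beta)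
      also have "\<dots> \<le> JJ M T q * ((1 + (\<Sum>x=1..M. q^x)) * JJ M T q ^ (k2 div 2))"
        using less.IH[of k2] kk JJ_nonneg[OF q, of M T] by (simp only: JJ_DD[symmetric]) (intro mult_left_mono, auto)
      also have "\<dots> = (1 + (\<Sum>x=1..M. q^x)) * JJ M T q ^ (k div 2)"
        using kk by simp
      finally show ?thesis .
    qed
  qed
qed


lemma length_le_sum_list: "\<forall>x\<in>set xs. (0::nat) < x \<Longrightarrow> length xs \<le> sum_list xs"
  by (induction xs) auto

lemma fam5_decomp:
  assumes "fam5 xs"
  defines "n \<equiv> length xs" and "l \<equiv> last_max5 xs"
  shows "1 \<le> l \<and> l \<le> n \<and> n \<le> 3*l \<and> n \<le> sum_list xs \<and> take (l-1) xs \<in> PA 5 5 (l-1)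
         \<and> drop l xs \<in> PA 4 4 (n-l) \<and> xs = take (l-1) xs @ 5 # drop l xs"
proof -
  have nsg: "nsg_comp xs" and five: "5 \<in> set xs" and le5: "\<forall>x\<in>set xs. x \<le> 5"
    and l3: "length xs \<le> 3 * last_max5 xs" using assms(1) unfolding fam5_def by auto
  have pos: "\<forall>x\<in>set xs. 0 < x"
    and ineq: "\<And>s t. 1 \<le> s \<Longrightarrow> 1 \<le> t \<Longrightarrow> s + t < n + 1 \<Longrightarrow>
          part xs (s + t) \<le> part xs s + part xs t \<and>
          part xs (n + 1 - s - t) \<le> part xs (n + 1 - s) + part xs (n + 1 - t) + 1"
    using nsg unfolding nsg_comp_def Let_def n_def by auto
  define S where "S = {l. 1 \<le> l \<and> l \<le> n \<and> part xs l = 5}"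
  have finS: "finite S" unfolding S_def by (rule finite_subset[of _ "{1..n}"]) auto
  obtain i where i: "i < n" "xs!i = 5" using five unfolding n_def by (auto simp: in_set_conv_nth)
  have "Suc i \<in> S" unfolding S_def part_def using i by auto
  then have neS: "S \<noteq> {}" by auto
  have lS: "l \<in> S" unfolding l_def last_max5_def S_def[symmetric, unfolded n_def] 
    using Max_in[OF finS neS] unfolding S_def n_def by simp
  have lmax: "j \<le> l" if "j \<in> S" for j
    unfolding l_def last_max5_def using Max_ge[OF finS that] unfolding S_def n_def by simp
  have l1: "1 \<le> l" and ln: "l \<le> n" and xl: "xs!(l-1) = 5" using lS unfolding S_def part_def by auto
  have sumn: "n \<le> sum_list xs" unfolding n_def by (rule length_le_sum_list[OF pos])
  have dec: "xs = take (l-1) xs @ 5 # drop l xs"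
    using id_take_nth_drop[of "l-1" xs] l1 ln xl unfolding n_def by simp
  have P5: "take (l-1) xs \<in> PA 5 5 (l-1)"
    unfolding PA_def
  proof (intro CollectI conjI allI impI ballI)
    show "length (take (l-1) xs) = l-1" using ln unfolding n_def by simp
  next
    fix x assume "x \<in> set (take (l-1) xs)"
    then have "x \<in> set xs" by (meson in_set_takeD)
    then show "1 \<le> x" "x \<le> 5" using pos le5 by auto
  next
    fix j assume j: "j < l-1"
    have "part xs (Suc j + (l-1-j)) \<le> part xs (Suc j) + part xs (l-1-j)"
      using ineq[of "Suc j" "l-1-j"] j ln by auto
    moreover have "Suc j + (l-1-j) = l" using j by simp
    ultimately have "5 \<le> xs!j + xs!(l-1-j-1)" using xl unfolding part_def by simp
    moreover have "l-1-j-1 = l-1-1-j" by simp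
    ultimately show "5 \<le> take (l-1) xs ! j + take (l-1) xs ! (l-1-1-j)"
      using j by simp
  qed
  have P4: "drop l xs \<in> PA 4 4 (n-l)"
    unfolding PA_def
  proof (intro CollectI conjI allI impI ballI)
    show "length (drop l xs) = n-l" unfolding n_def by simp
  next
    fix x assume "x \<in> set (drop l xs)"
    then obtain j where j: "j < n - l" "x = xs!(l+j)"
      unfolding n_def by (auto simp: in_set_conv_nth)
    have xin: "x \<in> set xs" using j unfolding n_def by auto
    have "Suc (l+j) \<notin> S" using lmax[of "Suc (l+j)"] by auto
    then have "x \<noteq> 5" using j unfolding S_def part_def by auto
    then show "1 \<le> x" "x \<le> 4" using pos le5 xin by auto
  next
    fix j assume j: "j < n-l"
    have "part xs (n + 1 - (n-l-j) - Suc j) \<le> part xs (n + 1 - (n-l-j)) + part xs (n + 1 - Suc j) + 1"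
      using ineq[of "n-l-j" "Suc j"] j l1 by auto
    moreover have "n + 1 - (n-l-j) - Suc j = l" using j by simp
    moreover have "n + 1 - (n-l-j) = Suc (l+j)" using j by simp
    moreover have "n + 1 - Suc j = Suc (n-1-j)" using j by simp
    ultimately have "5 \<le> xs!(l+j) + xs!(n-1-j) + 1" using xl unfolding part_def by simp
    moreover have "l + (n-l-1-j) = n-1-j" using j by simp
    ultimately show "4 \<le> drop l xs ! j + drop l xs ! (n-l-1-j)"
      using j unfolding n_def by simp
  qed
  show ?thesis using l1 ln l3 sumn P5 P4 dec unfolding n_def l_def by simp
qed


lemma JJ5: "JJ 5 5 q = I5 q"
  unfolding JJ_def I5_def by (simp add: numeral_eq_Suc)

lemma JJ4: "JJ 4 4 q = I4 q"
  unfolding JJ_def I4_def by (simp add: numeral_eq_Suc)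

lemma sum_prod_split:
  "(\<Sum>y\<in>A\<times>B. (f (fst y) * g (snd y))::real) = sum f A * sum g B"
  by (simp add: sum_product sum.cartesian_product case_prod_beta)

lemma pow_bound:
  fixes J5 J4 :: real
  assumes "J5 * J4^2 = 1" "1 \<le> J4" "0 \<le> J5" "b \<le> 2*a + 2"
  shows "J5^a * J4^b \<le> J4^2"
proof -
  have "J4^b \<le> J4^(2*a+2)" using assms by (intro power_increasing) auto
  then have "J5^a * J4^b \<le> J5^a * J4^(2*a+2)" using assms by (intro mult_left_mono) auto
  also have "\<dots> = (J5 * J4^2)^a * J4^2"
  proof -
    have "J4^(2*a+2) = (J4^2)^a * J4^2" by (metis power_add power_mult)
    moreover have "(J5 * J4^2)^a = J5^a * (J4^2)^a" by (rule power_mult_distrib)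
    ultimately show ?thesis by (simp only: mult.assoc)
  qed
  also have "\<dots> = J4^2" using assms by simp
  finally show ?thesis .
qed

lemma count_bound:
  fixes q :: real
  assumes q: "0 < q" and eq: "I5 q * (I4 q)^2 = 1" and ge: "1 \<le> I4 q"
  defines "K \<equiv> q^5 * (1 + (\<Sum>x=1..5. q^x)) * (1 + (\<Sum>x=1..4. q^x)) * (I4 q)^2"
  shows "real (count_fam5 g) * q^g \<le> real ((g+1)^2) * K"
proof -
  define Idx where "Idx = {p::nat\<times>nat. fst p \<le> g \<and> 1 \<le> snd p \<and> snd p \<le> fst p \<and> fst p \<le> 3 * snd p}"
  define B where "B = (\<lambda>p::nat\<times>nat. PA 5 5 (snd p - 1) \<times> PA 4 4 (fst p - snd p))"
  define Sig where "Sig = Sigma Idx B"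
  define h where "h = (\<lambda>x::(nat\<times>nat)\<times>(nat list\<times>nat list). fst (snd x) @ 5 # snd (snd x))"
  define F where "F = {xs. fam5 xs \<and> genus xs = g}"
  have IdxS: "Idx \<subseteq> {..g} \<times> {..g}" unfolding Idx_def by auto
  have finIdx: "finite Idx" using IdxS finite_subset by blast
  have cardIdx: "card Idx \<le> (g+1)^2"
    using card_mono[OF _ IdxS] by (simp add: card_cartesian_product power2_eq_square)
  have finB: "finite (B p)" for p unfolding B_def using finite_PA by auto
  have finSig: "finite Sig" unfolding Sig_def using finIdx finB by auto
  have FS: "F \<subseteq> h ` Sig"
  proof
    fix xs assume "xs \<in> F"
    then have f: "fam5 xs" and gg: "sum_list xs = g" unfolding F_def genus_def by auto
    note d = fam5_decomp[OF f]
    let ?p = "(length xs, last_max5 xs)"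
    have "?p \<in> Idx" using d gg unfolding Idx_def by auto
    moreover have "(take (last_max5 xs - 1) xs, drop (last_max5 xs) xs) \<in> B ?p"
      using d unfolding B_def by auto
    ultimately have "(?p, (take (last_max5 xs - 1) xs, drop (last_max5 xs) xs)) \<in> Sig"
      unfolding Sig_def by auto
    moreover have "xs = h (?p, (take (last_max5 xs - 1) xs, drop (last_max5 xs) xs))"
      unfolding h_def using d by simp
    ultimately show "xs \<in> h ` Sig" by blast
  qed
  have "real (count_fam5 g) * q^g = (\<Sum>xs\<in>F. q^g)"
    unfolding count_fam5_def F_def by simp
  also have "\<dots> = (\<Sum>xs\<in>F. q^(sum_list xs))"
    by (intro sum.cong) (auto simp: F_def genus_def)
  also have "\<dots> \<le> (\<Sum>xs\<in>h ` Sig. q^(sum_list xs))"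
    by (rule sum_mono2) (use FS finSig q in auto)
  also have "\<dots> \<le> (\<Sum>x\<in>Sig. q^(sum_list (h x)))"
    using sum_image_le[OF finSig, of "\<lambda>u. q^(sum_list u)" h] q by (simp add: o_def)
  also have "\<dots> = (\<Sum>p\<in>Idx. \<Sum>y\<in>B p. q^(sum_list (h (p, y))))"
    unfolding Sig_def using sum.Sigma[OF finIdx, of B "\<lambda>p y. q^(sum_list (h (p, y)))"] finB
    by (simp add: case_prod_beta)
  also have "\<dots> \<le> (\<Sum>p\<in>Idx. K)"
  proof (rule sum_mono)
    fix p assume pI: "p \<in> Idx"
    obtain n l where p: "p = (n, l)" by (cases p)
    have c5: "0 \<le> 1 + (\<Sum>x=1..5. q^x)" using q by (intro add_nonneg_nonneg sum_nonneg) auto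
    have i5: "0 \<le> I5 q ^ ((l-1) div 2)" using q unfolding I5_def by simp
    have nl: "1 \<le> l" "l \<le> n" "n \<le> 3*l" using pI unfolding Idx_def p by auto
    have "(\<Sum>y\<in>B p. q^(sum_list (h (p, y)))) =
          (\<Sum>y\<in>PA 5 5 (l-1) \<times> PA 4 4 (n-l). q^5 * (q^(sum_list (fst y)) * q^(sum_list (snd y))))"
      unfolding B_def p h_def by (intro sum.cong) (auto simp: power_add)
    also have "\<dots> = q^5 * ((\<Sum>u\<in>PA 5 5 (l-1). q^(sum_list u)) * (\<Sum>w\<in>PA 4 4 (n-l). q^(sum_list w)))"
      by (simp only: sum_distrib_left[symmetric] sum_prod_split[of "\<lambda>u. q^sum_list u" "\<lambda>w. q^sum_list w" "PA 5 5 (l-1)" "PA 4 4 (n-l)"])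
    also have "\<dots> \<le> q^5 * (((1 + (\<Sum>x=1..5. q^x)) * I5 q ^ ((l-1) div 2)) *
                          ((1 + (\<Sum>x=1..4. q^x)) * I4 q ^ ((n-l) div 2)))"
      using PA_bound[of q 5 5 "l-1"] PA_bound[of q 4 4 "n-l"] q c5 i5
      by (intro mult_left_mono mult_mono) (auto simp: JJ5 JJ4 intro!: sum_nonneg mult_nonneg_nonneg)
    also have "\<dots> = q^5 * (1 + (\<Sum>x=1..5. q^x)) * (1 + (\<Sum>x=1..4. q^x)) *
                    (I5 q ^ ((l-1) div 2) * I4 q ^ ((n-l) div 2))"
      by (simp add: ac_simps)
    also have "\<dots> \<le> q^5 * (1 + (\<Sum>x=1..5. q^x)) * (1 + (\<Sum>x=1..4. q^x)) * (I4 q)^2"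
    proof (rule mult_left_mono)
      have "0 \<le> I5 q" using q unfolding I5_def by simp
      moreover have "(n-l) div 2 \<le> 2 * ((l-1) div 2) + 2" using nl by linarith
      ultimately show "I5 q ^ ((l-1) div 2) * I4 q ^ ((n-l) div 2) \<le> (I4 q)^2"
        using pow_bound eq ge by blast
      show "0 \<le> q^5 * (1 + (\<Sum>x=1..5. q^x)) * (1 + (\<Sum>x=1..4. q^x))"
        using q by (intro mult_nonneg_nonneg add_nonneg_nonneg sum_nonneg) auto
    qed
    finally show "(\<Sum>y\<in>B p. q^(sum_list (h (p, y)))) \<le> K" unfolding K_def .
  qed
  also have "\<dots> = real (card Idx) * K" by simp
  also have "\<dots> \<le> real ((g+1)^2) * K"
  proof (rule mult_right_mono)
    show "real (card Idx) \<le> real ((g+1)^2)" using cardIdx by linarith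
    show "0 \<le> K" unfolding K_def using q by (intro mult_nonneg_nonneg add_nonneg_nonneg sum_nonneg) auto
  qed
  finally show ?thesis .
qed


lemma I4_mono: "0 \<le> x \<Longrightarrow> x \<le> y \<Longrightarrow> I4 x \<le> I4 y"
  unfolding I4_def by (intro add_mono mult_left_mono power_mono) auto

lemma I5_mono: "0 \<le> x \<Longrightarrow> x \<le> y \<Longrightarrow> I5 x \<le> I5 y"
  unfolding I5_def by (intro add_mono mult_left_mono power_mono) auto

lemma I4_nonneg: "0 \<le> x \<Longrightarrow> 0 \<le> I4 x" unfolding I4_def by simp
lemma I5_nonneg: "0 \<le> x \<Longrightarrow> 0 \<le> I5 x" unfolding I5_def by simp

lemma P_mono: "0 \<le> x \<Longrightarrow> x \<le> y \<Longrightarrow> I5 x * (I4 x)^2 \<le> I5 y * (I4 y)^2"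
  by (intro mult_mono power_mono I4_mono I5_mono I4_nonneg I5_nonneg zero_le_power) auto

lemma num1: "I5 (6189/10000) * (I4 (6189/10000))^2 < 1"
  by (simp add: I4_def I5_def power_divide power2_eq_square)
lemma num2: "I5 (619/1000) * (I4 (619/1000))^2 > 1"
  by (simp add: I4_def I5_def power_divide power2_eq_square)
lemma num3: "I4 (6189/10000) \<ge> 1"
  by (simp add: I4_def power_divide)

lemma root_lim:
  assumes "0 < K"
  shows "(\<lambda>g. root g (K * (real g + 1)^2)) \<longlonglongrightarrow> 1"
proof -
  have "(\<lambda>g. root g K * (root g (real g + 1))^2) \<longlonglongrightarrow> 1 * 1^2"
  proof (intro tendsto_intros)
    show "(\<lambda>g. root g K) \<longlonglongrightarrow> 1" using LIMSEQ_root_const[OF assms] .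
    have "(\<lambda>g. (real g + 1) powr (1 / real g)) \<longlonglongrightarrow> 1" by real_asymp
    then show "(\<lambda>g. root g (real g + 1)) \<longlonglongrightarrow> 1"
    proof (rule Lim_transform_eventually)
      show "\<forall>\<^sub>F g in sequentially. (real g + 1) powr (1 / real g) = root g (real g + 1)"
        using eventually_gt_at_top[of 0] by eventually_elim (simp add: root_powr_inverse)
    qed
  qed
  moreover have "root g K * (root g (real g + 1))^2 = root g (K * (real g + 1)^2)" for g
    by (cases "g = 0") (simp_all add: real_root_mult real_root_power)
  ultimately show ?thesis by simp
qed

theorem proposition11p4:
  fixes \<rho> :: real
  assumes "\<rho> > 0" and "1 - I5 \<rho> * (I4 \<rho>)^2 = 0"
  shows "growth_rate count_fam5 \<le> ereal (1 / \<rho>)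
         \<and> 0.6189 < \<rho> \<and> \<rho> < 0.619 \<and> \<rho> > 1 / omega
         \<and> growth_rate count_fam5 < ereal omega"
proof -
  have eq: "I5 \<rho> * (I4 \<rho>)^2 = 1" using assms(2) by simp
  have lo: "6189/10000 < \<rho>"
  proof (rule ccontr)
    assume "\<not> ?thesis"
    then have "I5 \<rho> * (I4 \<rho>)^2 \<le> I5 (6189/10000) * (I4 (6189/10000))^2"
      using assms(1) by (intro P_mono) auto
    then show False using eq num1 by simp
  qed
  have hi: "\<rho> < 619/1000"
  proof (rule ccontr)
    assume "\<not> ?thesis"
    then have "I5 (619/1000) * (I4 (619/1000))^2 \<le> I5 \<rho> * (I4 \<rho>)^2"
      by (intro P_mono) auto
    then show False using eq num2 by simp
  qed
  have ge: "1 \<le> I4 \<rho>" using num3 I4_mono[of "6189/10000" \<rho>] lo by simp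
  have s5: "(22316/10000::real) < sqrt 5" by (rule real_less_rsqrt) (simp add: power2_eq_square)
  have om: "omega > 0" unfolding omega_def by (simp add: add_pos_nonneg)
  have om1: "1 / omega < 6189/10000"
  proof -
    have "1 < 6189/10000 * omega" unfolding omega_def using s5 by simp
    then show ?thesis using om by (simp add: field_simps)
  qed
  have rho_om: "1 / \<rho> < omega"
  proof -
    have a: "1 / \<rho> < 1 / (6189/10000)"
      using lo assms(1) by (intro divide_strict_left_mono) auto
    have "1 < 6189/10000 * omega" using om1 om by (simp add: field_simps)
    then have "1 / (6189/10000) < omega" by (simp add: field_simps)
    with a show ?thesis by linarith
  qed
  define K where "K = \<rho>^5 * (1 + (\<Sum>x=1..5. \<rho>^x)) * (1 + (\<Sum>x=1..4. \<rho>^x)) * (I4 \<rho>)^2"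
  have Kpos: "0 < K" unfolding K_def using assms(1) ge
    by (intro mult_pos_pos add_pos_nonneg sum_nonneg) auto
  have cb: "real (count_fam5 g) * \<rho>^g \<le> real ((g+1)^2) * K" for g
    using count_bound[OF assms(1) eq ge] unfolding K_def by simp
  define h where "h = (\<lambda>g. root g (K * (real g + 1)^2) / \<rho>)"
  have hlim: "h \<longlonglongrightarrow> 1 * (1/\<rho>)"
    unfolding h_def divide_inverse using root_lim[OF Kpos] by (intro tendsto_intros) auto
  have le: "root g (real (count_fam5 g)) \<le> h g" if g: "g > 0" for g
  proof -
    have "real (count_fam5 g) \<le> K * (real g + 1)^2 / \<rho>^g"
      using cb[of g] assms(1) by (simp add: field_simps)
    then have "root g (real (count_fam5 g)) \<le> root g (K * (real g + 1)^2 / \<rho>^g)"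
      using g by (simp add: real_root_le_iff)
    also have "\<dots> = root g (K * (real g + 1)^2) / \<rho>"
      using g assms(1) by (simp add: real_root_divide real_root_pos2)
    finally show ?thesis unfolding h_def .
  qed
  have gr: "growth_rate count_fam5 \<le> ereal (1/\<rho>)"
  proof -
    have "growth_rate count_fam5 \<le> limsup (\<lambda>g. ereal (h g))"
      unfolding growth_rate_def
    proof (rule Limsup_mono)
      show "\<forall>\<^sub>F g in sequentially. ereal (root g (real (count_fam5 g))) \<le> ereal (h g)"
        using eventually_gt_at_top[of "0::nat"] by eventually_elim (simp add: le)
    qed
    also have "limsup (\<lambda>g. ereal (h g)) = ereal (1/\<rho>)"
      by (rule lim_imp_Limsup) (use hlim in auto)
    finally show ?thesis .
  qed
  show ?thesis
    using gr lo hi om1 rho_om order.strict_trans1[OF gr] by auto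
qed

end
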